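(* Let $c>0$, $0<\lambda<T_M$, and let $f\in C^2(\mathbb R)$ solve $$f''(y)-cf'(y)-f^4(y)=-\int_{-\infty}^\infty E(y-\eta)f^4(\eta)\,d\eta\ (y\in\mathbb R),\qquad 0<\lambda\le f\le T_M.$$ Then there exists $\varepsilon_0=\varepsilon_0(T_M,\lambda,c)>0$ such that for every $\varepsilon<\varepsilon_0$ there exists $L_0=L_0(\varepsilon,T_M,\lambda,c)>0$ with the property that, for every $L>L_0$, if $\operatorname{osc}_{[-L,L]}f<\varepsilon$ then $\operatorname{osc}_{[L,\infty)}f<3\varepsilon$.
   Context: $E(x)=\frac12\int_{|x|}^\infty\frac{e^{-t}}{t}dt$. For $I\subseteq\mathbb R$, $\operatorname{osc}_I f=\sup_{y_1,y_2\in I}|f(y_1)-f(y_2)|$. *)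

theory Defs
  imports "HOL-Analysis.Analysis"
begin

text \<open>The kernel E(x) = 1/2 * integral from |x| to infinity of exp(-t)/t dt
  (Lebesgue integral; E(0) is the divergent value, a single point, irrelevant).\<close>
definition E :: "real \<Rightarrow> real" where
  "E x = 1/2 * (LBINT t:{\<bar>x\<bar><..}. exp (- t) / t)"

definition osc :: "real set \<Rightarrow> (real \<Rightarrow> real) \<Rightarrow> real" where
  "osc I f = Sup {\<bar>f y1 - f y2\<bar> | y1 y2. y1 \<in> I \<and> y2 \<in> I}"

definition C2 :: "(real \<Rightarrow> real) \<Rightarrow> bool" where
  "C2 f \<longleftrightarrow> (\<forall>y. f differentiable (at y)) \<and> (\<forall>y. deriv f differentiable (at y))
      \<and> continuous_on UNIV (deriv (deriv f))"

definition solves :: "real \<Rightarrow> real \<Rightarrow> real \<Rightarrow> (real \<Rightarrow> real) \<Rightarrow> bool" where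
  "solves c lam TM f \<longleftrightarrow> C2 f \<and>
     (\<forall>y. deriv (deriv f) y - c * deriv f y - f y ^ 4
            = - (LINT \<eta>|lborel. E (y - \<eta>) * f \<eta> ^ 4)) \<and>
     (\<forall>y. lam \<le> f y \<and> f y \<le> TM)"

end

theory Submission
  imports Defs
begin

lemma E_nonneg: "E x \<ge> 0"
  unfolding E_def set_lebesgue_integral_def
  by (auto intro!: integral_nonneg_AE simp: indicator_def)

lemma E_even: "E (-x) = E x"
  unfolding E_def by simp

lemma E_alt: "E x = 1/2 * enn2real (\<integral>\<^sup>+ t. ennreal (if \<bar>x\<bar> < t then exp (-t) / t else 0) \<partial>lborel)"
proof -
  have "(LBINT t:{\<bar>x\<bar><..}. exp (- t) / t) = (LINT t|lborel. (if \<bar>x\<bar> < t then exp (-t) / t else 0))"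
    unfolding set_lebesgue_integral_def by (intro Bochner_Integration.integral_cong) (auto simp: indicator_def)
  also have "\<dots> = enn2real (\<integral>\<^sup>+ t. ennreal (if \<bar>x\<bar> < t then exp (-t) / t else 0) \<partial>lborel)"
    by (rule integral_eq_nn_integral) auto
  finally show ?thesis unfolding E_def by simp
qed

lemma Ekern_meas: "(\<lambda>(x,t). if \<bar>x\<bar> < t then exp (-t) / t else (0::real)) \<in> borel_measurable (borel \<Otimes>\<^sub>M borel)"
proof -
  have "(\<lambda>z::real\<times>real. if \<bar>fst z\<bar> < snd z then exp (- snd z) / snd z else 0) \<in> borel_measurable (borel \<Otimes>\<^sub>M borel)"
    by (intro measurable_If) measurable
  then show ?thesis by (simp add: case_prod_beta')
qed

lemma E_meas[measurable]: "E \<in> borel_measurable borel"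
proof -
  have m: "(\<lambda>x::real. LINT t|lborel. (if \<bar>x\<bar> < t then exp (-t) / t else (0::real))) \<in> borel_measurable borel"
    apply (rule sigma_finite_measure.borel_measurable_lebesgue_integral[OF lborel.sigma_finite_measure_axioms])
    apply (subst measurable_cong_sets[OF sets_pair_measure_cong[OF refl sets_lborel] refl])
    apply (rule Ekern_meas)
    done
  have eq: "E = (\<lambda>x. 1/2 * (LINT t|lborel. (if \<bar>x\<bar> < t then exp (-t) / t else 0)))"
    unfolding E_def set_lebesgue_integral_def
    by (intro ext arg_cong[where f="\<lambda>u. 1/2 * u"] Bochner_Integration.integral_cong) (auto simp: indicator_def)
  show ?thesis unfolding eq by (rule borel_measurable_times[OF borel_measurable_const m])
qed

definition X :: "real \<Rightarrow> ennreal" where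
  "X z = (\<integral>\<^sup>+ t. ennreal (if \<bar>z\<bar> < t then exp (-t) / t else 0) \<partial>lborel)"

lemma exp_nn: "(\<integral>\<^sup>+ t. ennreal (indicator {s..} t * exp (-t)) \<partial>lborel) = exp (-s)"
  using nn_integral_has_integral_lebesgue[of "{s..}" "\<lambda>t. exp (-t)" "exp (-s)"]
    has_integral_exp_minus_to_infinity[of 1 s] by simp

lemma tonelli_X:
  assumes A[measurable]: "A \<in> sets borel"
  shows "(\<integral>\<^sup>+ z. X z * indicator A z \<partial>lborel)
     = (\<integral>\<^sup>+ t. ennreal (exp (-t) / t) * emeasure lborel ({z. \<bar>z\<bar> < t} \<inter> A) \<partial>lborel)"
proof -
  have m: "(\<lambda>(z,t). ennreal (if \<bar>z\<bar> < t then exp (-t) / t else 0) * indicator A z) \<in> borel_measurable (lborel \<Otimes>\<^sub>M lborel)"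
  proof -
    have "(\<lambda>(z::real,t::real). if \<bar>z\<bar> < t then exp (-t) / t else (0::real)) \<in> borel_measurable (borel \<Otimes>\<^sub>M borel)"
      by (rule Ekern_meas)
    then have "(\<lambda>(z::real,t::real). ennreal (if \<bar>z\<bar> < t then exp (-t) / t else (0::real)) * indicator A z) \<in> borel_measurable (borel \<Otimes>\<^sub>M borel)"
      by measurable
    then show ?thesis
      by (subst measurable_cong_sets[OF sets_pair_measure_cong[OF sets_lborel sets_lborel] refl])
  qed
  have "(\<integral>\<^sup>+ z. X z * indicator A z \<partial>lborel) = (\<integral>\<^sup>+ z. (\<integral>\<^sup>+ t. ennreal (if \<bar>z\<bar> < t then exp (-t) / t else 0) * indicator A z \<partial>lborel) \<partial>lborel)"
    unfolding X_def by (simp add: nn_integral_multc)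
  also have "\<dots> = (\<integral>\<^sup>+ t. (\<integral>\<^sup>+ z. ennreal (if \<bar>z\<bar> < t then exp (-t) / t else 0) * indicator A z \<partial>lborel) \<partial>lborel)"
    using lborel_pair.Fubini'[OF m] by simp
  also have "\<dots> = (\<integral>\<^sup>+ t. ennreal (exp (-t) / t) * emeasure lborel ({z. \<bar>z\<bar> < t} \<inter> A) \<partial>lborel)"
  proof (intro nn_integral_cong)
    fix t :: real
    have "(\<integral>\<^sup>+ z. ennreal (if \<bar>z\<bar> < t then exp (-t) / t else 0) * indicator A z \<partial>lborel)
       = (\<integral>\<^sup>+ z. ennreal (exp (-t) / t) * indicator ({z. \<bar>z\<bar> < t} \<inter> A) z \<partial>lborel)"
      by (intro nn_integral_cong) (auto simp: indicator_def)
    also have "\<dots> = ennreal (exp (-t) / t) * emeasure lborel ({z. \<bar>z\<bar> < t} \<inter> A)"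
      by (rule nn_integral_cmult_indicator) measurable
    finally show "(\<integral>\<^sup>+ z. ennreal (if \<bar>z\<bar> < t then exp (-t) / t else 0) * indicator A z \<partial>lborel)
       = ennreal (exp (-t) / t) * emeasure lborel ({z. \<bar>z\<bar> < t} \<inter> A)" .
  qed
  finally show ?thesis .
qed

lemma X_meas[measurable]: "X \<in> borel_measurable borel"
proof -
  have "(\<lambda>(z::real,t::real). ennreal (if \<bar>z\<bar> < t then exp (-t) / t else (0::real))) \<in> borel_measurable (borel \<Otimes>\<^sub>M borel)"
    using Ekern_meas by measurable
  then have "(\<lambda>(z::real,t::real). ennreal (if \<bar>z\<bar> < t then exp (-t) / t else (0::real))) \<in> borel_measurable (borel \<Otimes>\<^sub>M lborel)"
    by (subst measurable_cong_sets[OF sets_pair_measure_cong[OF refl sets_lborel] refl])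
  then show ?thesis unfolding X_def
    using lborel.borel_measurable_nn_integral[of "\<lambda>z t. ennreal (if \<bar>z\<bar> < t then exp (-t) / t else (0::real))" borel]
    by simp
qed

lemma X_total: "(\<integral>\<^sup>+ z. X z \<partial>lborel) = 2"
proof -
  have "(\<integral>\<^sup>+ z. X z \<partial>lborel) = (\<integral>\<^sup>+ z. X z * indicator UNIV z \<partial>lborel)" by simp
  also have "\<dots> = (\<integral>\<^sup>+ t. ennreal (exp (-t) / t) * emeasure lborel ({z. \<bar>z\<bar> < t} \<inter> UNIV) \<partial>lborel)"
    by (rule tonelli_X) simp
  also have "\<dots> = (\<integral>\<^sup>+ t. 2 * ennreal (indicator {0..} t * exp (-t)) \<partial>lborel)"
  proof (rule nn_integral_cong_AE)
    show "AE t in lborel. ennreal (exp (-t) / t) * emeasure lborel ({z. \<bar>z\<bar> < t} \<inter> UNIV) = 2 * ennreal (indicator {0..} t * exp (-t))"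
      using AE_lborel_singleton[of 0]
    proof eventually_elim
      case (elim t)
      show ?case
      proof (cases "t > 0")
        case True
        have "{z. \<bar>z\<bar> < t} \<inter> UNIV = {-t<..<t}" by auto
        then have "emeasure lborel ({z. \<bar>z\<bar> < t} \<inter> UNIV) = ennreal (2*t)"
          using True by (simp add: emeasure_lborel_Ioo)
        then show ?thesis using True
          by (simp add: ennreal_mult'[symmetric] ennreal_mult[symmetric] indicator_def mult.commute)
             (simp add: ennreal_mult)
      next
        case False
        then have "{z. \<bar>z\<bar> < t} \<inter> UNIV = {}" by auto
        then show ?thesis using False elim by (simp add: indicator_def)
      qed
    qed
  qed
  also have "\<dots> = 2 * ennreal (exp (-0))"
    by (subst nn_integral_cmult) (auto simp: exp_nn)
  finally show ?thesis by simp
qed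

lemma X_tail:
  assumes s: "s \<ge> 0"
  shows "(\<integral>\<^sup>+ z. X z * indicator {s<..} z \<partial>lborel) \<le> exp (-s)"
proof -
  have "(\<integral>\<^sup>+ z. X z * indicator {s<..} z \<partial>lborel)
     = (\<integral>\<^sup>+ t. ennreal (exp (-t) / t) * emeasure lborel ({z. \<bar>z\<bar> < t} \<inter> {s<..}) \<partial>lborel)"
    by (rule tonelli_X) simp
  also have "\<dots> \<le> (\<integral>\<^sup>+ t. ennreal (indicator {s..} t * exp (-t)) \<partial>lborel)"
  proof (rule nn_integral_mono)
    fix t :: real
    show "ennreal (exp (-t) / t) * emeasure lborel ({z. \<bar>z\<bar> < t} \<inter> {s<..}) \<le> ennreal (indicator {s..} t * exp (-t))"
    proof (cases "t > s")
      case True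
      have "{z. \<bar>z\<bar> < t} \<inter> {s<..} = {s<..<t}" using s by auto
      then have "emeasure lborel ({z. \<bar>z\<bar> < t} \<inter> {s<..}) = ennreal (t - s)"
        using True by (simp add: emeasure_lborel_Ioo)
      moreover have "exp (-t) / t * (t - s) \<le> exp (-t)"
      proof -
        have "exp (-t) / t * (t - s) = exp (-t) * ((t - s) / t)" by simp
        also have "\<dots> \<le> exp (-t) * 1"
          using True s by (intro mult_left_mono) auto
        finally show ?thesis by simp
      qed
      moreover have "0 \<le> exp (-t) / t" using True s by simp
      ultimately show ?thesis using True
        by (simp add: ennreal_mult[symmetric] indicator_def)
    next
      case False
      then have "{z. \<bar>z\<bar> < t} \<inter> {s<..} = {}" by auto
      then show ?thesis by simp
    qed
  qed
  also have "\<dots> = exp (-s)" by (rule exp_nn)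
  finally show ?thesis .
qed

lemma X_fin: "AE z in lborel. X z \<noteq> \<infinity>"
  by (rule nn_integral_PInf_AE) (auto simp: X_total)

lemma E_X: "AE z in lborel. ennreal (E z) = X z / 2"
  using X_fin
proof eventually_elim
  case (elim z)
  have "E z = 1/2 * enn2real (X z)" unfolding X_def by (rule E_alt)
  then have e: "E z = enn2real (X z) / 2" by simp
  have "ennreal (E z) = ennreal (enn2real (X z)) / 2"
    unfolding e by (subst divide_ennreal[symmetric]) auto
  also have "\<dots> = X z / 2" using elim by (simp add: less_top)
  finally show ?case .
qed

lemma E_nn_total: "(\<integral>\<^sup>+ z. ennreal (E z) \<partial>lborel) = 1"
proof -
  have "(\<integral>\<^sup>+ z. ennreal (E z) \<partial>lborel) = (\<integral>\<^sup>+ z. X z / 2 \<partial>lborel)"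
    by (rule nn_integral_cong_AE[OF E_X])
  also have "\<dots> = (\<integral>\<^sup>+ z. X z \<partial>lborel) / 2"
    by (simp add: divide_ennreal_def nn_integral_multc)
  finally show ?thesis by (simp add: X_total)
qed

lemma E_integrable: "integrable lborel E"
  by (rule integrableI_nonneg) (auto simp: E_nonneg E_nn_total)

lemma E_total: "(LINT z|lborel. E z) = 1"
  by (subst integral_eq_nn_integral) (auto simp: E_nonneg E_nn_total)

lemma E_tail_nn:
  assumes "s \<ge> 0"
  shows "(\<integral>\<^sup>+ z. ennreal (indicator {s<..} z * E z) \<partial>lborel) \<le> exp (-s) / 2"
proof -
  have "(\<integral>\<^sup>+ z. ennreal (indicator {s<..} z * E z) \<partial>lborel) = (\<integral>\<^sup>+ z. X z * indicator {s<..} z / 2 \<partial>lborel)"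
    by (rule nn_integral_cong_AE) (use E_X in \<open>eventually_elim, auto simp: indicator_def\<close>)
  also have "\<dots> = (\<integral>\<^sup>+ z. X z * indicator {s<..} z \<partial>lborel) / 2"
    by (simp add: divide_ennreal_def nn_integral_multc)
  also have "\<dots> \<le> ennreal (exp (-s)) / 2"
    by (intro divide_right_mono_ennreal X_tail assms)
  finally show ?thesis using divide_ennreal[of "exp (-s)" 2] by simp
qed

definition T :: "real \<Rightarrow> real" where "T s = (LINT z|lborel. indicator {s<..} z * E z)"

lemma T_integrable: "integrable lborel (\<lambda>z. indicator {s<..} z * E z)"
  by (rule Bochner_Integration.integrable_bound[OF E_integrable]) (auto simp: indicator_def E_nonneg)

lemma T_nonneg: "T s \<ge> 0"
  unfolding T_def by (auto intro!: integral_nonneg_AE simp: E_nonneg)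

lemma T_bound: "s \<ge> 0 \<Longrightarrow> T s \<le> exp (-s) / 2"
proof -
  assume s: "s \<ge> 0"
  have "ennreal (T s) = (\<integral>\<^sup>+ z. ennreal (indicator {s<..} z * E z) \<partial>lborel)"
    unfolding T_def by (rule nn_integral_eq_integral[symmetric, OF T_integrable]) (auto simp: E_nonneg)
  also have "\<dots> \<le> ennreal (exp (-s) / 2)" using E_tail_nn[OF s] by simp
  finally show ?thesis by (subst (asm) ennreal_le_iff) auto
qed

lemma conv_shift: fixes F :: "real \<Rightarrow> real" shows "(LINT \<eta>|lborel. F (y - \<eta>)) = (LINT z|lborel. (F z :: real))"
  using lborel_integral_real_affine[of "-1" F y] by simp

lemma conv_shift_int: fixes F :: "real \<Rightarrow> real" shows "integrable lborel (\<lambda>\<eta>. F (y - \<eta>) :: real) \<longleftrightarrow> integrable lborel F"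
  using lborel_integrable_real_affine_iff[of "-1" F y] by simp

lemma E_shift_integrable: "integrable lborel (\<lambda>\<eta>. E (y - \<eta>))"
  using conv_shift_int[of E y] E_integrable by simp

lemma E_shift_total: "(LINT \<eta>|lborel. E (y - \<eta>)) = 1"
  using conv_shift[of E y] E_total by simp

lemma E_left: "(LINT \<eta>|lborel. indicator {..<a} \<eta> * E (y - \<eta>)) = T (y - a)"
proof -
  have "(LINT \<eta>|lborel. indicator {..<a} \<eta> * E (y - \<eta>)) = (LINT \<eta>|lborel. (\<lambda>z. indicator {y-a<..} z * E z) (y - \<eta>))"
    by (intro Bochner_Integration.integral_cong) (auto simp: indicator_def)
  also have "\<dots> = T (y - a)" unfolding T_def by (rule conv_shift)
  finally show ?thesis .
qed

lemma E_left_int: "integrable lborel (\<lambda>\<eta>. indicator {..<a} \<eta> * E (y - \<eta>))"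
proof -
  have "integrable lborel (\<lambda>\<eta>. (\<lambda>z. indicator {y-a<..} z * E z) (y - \<eta>))"
    using conv_shift_int[of "\<lambda>z. indicator {y-a<..} z * E z" y] T_integrable[of "y-a"] by simp
  moreover have "(\<lambda>\<eta>. (\<lambda>z. indicator {y-a<..} z * E z) (y - \<eta>)) = (\<lambda>\<eta>. indicator {..<a} \<eta> * E (y - \<eta>))"
    by (rule ext) (simp add: indicator_def)
  ultimately show ?thesis by simp
qed

lemma E_swap: "E (a - b) = E (b - a)"
  by (metis E_even minus_diff_eq)

lemma E_right: "(LINT \<eta>|lborel. indicator {b<..} \<eta> * E (y - \<eta>)) = T (b - y)"
proof -
  have "(LINT \<eta>|lborel. indicator {b<..} \<eta> * E (y - \<eta>)) = (LINT \<eta>|lborel. (\<lambda>z. indicator {b-y<..} z * E z) (\<eta> - y))"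
    by (intro Bochner_Integration.integral_cong) (auto simp: indicator_def E_swap[of y])
  also have "\<dots> = T (b - y)" unfolding T_def
    using lborel_integral_real_affine[of 1 "\<lambda>z. indicator {b-y<..} z * E z" "-y"] by simp
  finally show ?thesis .
qed

lemma E_right_int: "integrable lborel (\<lambda>\<eta>. indicator {b<..} \<eta> * E (y - \<eta>))"
proof -
  have "integrable lborel (\<lambda>\<eta>. (\<lambda>z. indicator {b-y<..} z * E z) (-y + 1 * \<eta>))"
    using lborel_integrable_real_affine_iff[of 1 "\<lambda>z. indicator {b-y<..} z * E z" "-y"] T_integrable[of "b-y"] by simp
  moreover have "(\<lambda>\<eta>. (\<lambda>z. indicator {b-y<..} z * E z) (-y + 1 * \<eta>)) = (\<lambda>\<eta>. indicator {b<..} \<eta> * E (y - \<eta>))"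
    by (rule ext) (simp add: indicator_def E_swap[of y])
  ultimately show ?thesis by simp
qed

lemma pow4_diff: fixes u v M :: real
  assumes "0 \<le> u" "u \<le> M" "0 \<le> v" "v \<le> M"
  shows "\<bar>u^4 - v^4\<bar> \<le> 4 * M^3 * \<bar>u - v\<bar>"
proof -
  have "u^4 - v^4 = (u - v) * (u^3 + u^2 * v + u * v^2 + v^3)" by algebra
  moreover have "0 \<le> u^3 + u^2 * v + u * v^2 + v^3" using assms by simp
  moreover have "u^3 + u^2 * v + u * v^2 + v^3 \<le> 4 * M^3"
  proof -
    have u2: "u^2 \<le> M^2" and v2: "v^2 \<le> M^2" using assms by (auto intro!: power_mono)
    have "u^3 \<le> M^3" "v^3 \<le> M^3" using assms by (auto intro!: power_mono)
    moreover have "u^2 * v \<le> M^2 * M" using u2 assms by (intro mult_mono) auto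
    moreover have "u * v^2 \<le> M * M^2" using v2 assms by (intro mult_mono) auto
    ultimately have "u^3 \<le> M^3" "u^2 * v \<le> M^3" "u * v^2 \<le> M^3" "v^3 \<le> M^3"
      by (auto simp: power3_eq_cube power2_eq_square mult.assoc)
    then show ?thesis by simp
  qed
  ultimately show ?thesis
    by (simp add: abs_mult) (metis abs_ge_zero mult.commute mult_left_mono)
qed

lemma pow4_mono_prod: fixes u v :: real
  assumes "0 \<le> u" "0 \<le> v"
  shows "0 \<le> (u - v) * (u^4 - v^4)"
proof (cases "u \<le> v")
  case True
  then have "u^4 \<le> v^4" using assms by (intro power_mono) auto
  then show ?thesis using True by (intro mult_nonpos_nonpos) auto
next
  case False
  then have "v^4 \<le> u^4" using assms by (intro power_mono) auto
  then show ?thesis using False by (intro mult_nonneg_nonneg) auto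
qed

definition Nin :: "(real \<Rightarrow> real) \<Rightarrow> real \<Rightarrow> real \<Rightarrow> real \<Rightarrow> real" where
  "Nin f a b y = (LINT \<eta>|lborel. indicator {a..b} \<eta> * E (y - \<eta>) * (f y ^ 4 - f \<eta> ^ 4))"

definition Nout :: "(real \<Rightarrow> real) \<Rightarrow> real \<Rightarrow> real \<Rightarrow> real \<Rightarrow> real" where
  "Nout f a b y = (LINT \<eta>|lborel. indicator (- {a..b}) \<eta> * E (y - \<eta>) * (f y ^ 4 - f \<eta> ^ 4))"

lemma E_diff_meas[measurable]: "(\<lambda>(y, \<eta>). E (y - \<eta>)) \<in> borel_measurable (borel \<Otimes>\<^sub>M borel)"
proof -
  have "(\<lambda>z::real\<times>real. fst z - snd z) \<in> borel_measurable (borel \<Otimes>\<^sub>M borel)" by measurable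
  from measurable_compose[OF this E_meas] show ?thesis by (simp add: case_prod_beta')
qed

locale wave =
  fixes c lam TM :: real and f :: "real \<Rightarrow> real"
  assumes cpos: "c > 0" and lampos: "0 < lam" and sol: "solves c lam TM f"
begin

lemma f_lo: "lam \<le> f y" and f_hi: "f y \<le> TM"
  using sol unfolding solves_def by auto

lemma f_pos: "0 \<le> f y" using f_lo[of y] lampos by simp

lemma TM_pos: "0 < TM" using f_lo[of 0] f_hi[of 0] lampos by simp

lemma fD: "(f has_real_derivative deriv f y) (at y)"
  using sol unfolding solves_def C2_def by (simp add: DERIV_deriv_iff_real_differentiable)

lemma pD: "(deriv f has_real_derivative deriv (deriv f) y) (at y)"
  using sol unfolding solves_def C2_def by (simp add: DERIV_deriv_iff_real_differentiable)

lemma f_cont: "continuous_on A f"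
  using fD by (meson DERIV_isCont continuous_at_imp_continuous_on)

lemma p_cont: "continuous_on A (deriv f)"
  using pD by (meson DERIV_isCont continuous_at_imp_continuous_on)

lemma q_cont: "continuous_on A (deriv (deriv f))"
  using sol unfolding solves_def C2_def by (meson continuous_on_subset top_greatest)

lemma f_meas[measurable]: "f \<in> borel_measurable borel"
  by (rule borel_measurable_continuous_onI[OF f_cont])

lemma eqn: "deriv (deriv f) y - c * deriv f y = f y ^ 4 - (LINT \<eta>|lborel. E (y - \<eta>) * f \<eta> ^ 4)"
  using sol unfolding solves_def by (auto simp: algebra_simps)

lemma g_bounds: "0 \<le> f y ^ 4" "f y ^ 4 \<le> TM ^ 4"
  using f_pos[of y] f_hi[of y] by (auto intro: power_mono)

lemma Eg_int: "integrable lborel (\<lambda>\<eta>. E (y - \<eta>) * f \<eta> ^ 4)"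
proof (rule Bochner_Integration.integrable_bound[OF integrable_mult_right[OF E_shift_integrable, of "TM^4" y]])
  have b: "norm (E (y - x) * f x ^ 4) \<le> norm (TM ^ 4 * E (y - x))" for x
    using mult_left_mono[OF g_bounds(2)[of x] E_nonneg[of "y-x"]] E_nonneg[of "y-x"] g_bounds[of x]
    by (simp add: abs_mult mult.commute)
  then show "AE x in lborel. norm (E (y - x) * f x ^ 4) \<le> norm (TM ^ 4 * E (y - x))" by simp
qed measurable

lemma conv_nonneg: "0 \<le> (LINT \<eta>|lborel. E (y - \<eta>) * f \<eta> ^ 4)"
  by (intro integral_nonneg_AE) (auto simp: E_nonneg g_bounds)

lemma conv_le: "(LINT \<eta>|lborel. E (y - \<eta>) * f \<eta> ^ 4) \<le> TM ^ 4"
proof -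
  have b: "E (y - x) * f x ^ 4 \<le> TM ^ 4 * E (y - x)" for x
    by (metis mult.commute mult_left_mono E_nonneg g_bounds(2))
  have "(LINT \<eta>|lborel. E (y - \<eta>) * f \<eta> ^ 4) \<le> (LINT \<eta>|lborel. TM^4 * E (y - \<eta>))"
    by (intro integral_mono Eg_int integrable_mult_right E_shift_integrable b)
  also have "\<dots> = TM^4" using E_shift_total[of y] by simp
  finally show ?thesis .
qed

lemma h_bound: "\<bar>deriv (deriv f) y - c * deriv f y\<bar> \<le> TM ^ 4"
  using eqn[of y] conv_nonneg[of y] conv_le[of y] g_bounds[of y] by linarith

lemma p_bound: "\<bar>deriv f y0\<bar> \<le> TM ^ 4 / c"
proof (rule ccontr)
  define H where "H = TM ^ 4"
  have hb: "\<bar>deriv (deriv f) s - c * deriv f s\<bar> \<le> H" for s unfolding H_def by (rule h_bound)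
  assume "\<not> \<bar>deriv f y0\<bar> \<le> TM ^ 4 / c"
  then have "deriv f y0 > H / c \<or> deriv f y0 < - (H / c)" unfolding H_def by linarith
  then show False
  proof
    assume a: "deriv f y0 > H / c"
    define \<delta> where "\<delta> = deriv f y0 - H / c"
    have dpos: "\<delta> > 0" using a unfolding \<delta>_def by simp
    have Hnn: "H / c \<ge> 0" unfolding H_def using cpos by simp
    have pge: "deriv f s \<ge> \<delta>" if s: "s \<ge> y0" for s
    proof -
      let ?r = "\<lambda>s. exp (-c * s) * (deriv f s - H / c)"
      have "?r y0 \<le> ?r s"
      proof (rule deriv_nonneg_imp_mono[OF _ _ s])
        fix x
        show "(?r has_real_derivative (exp (-c * x) * (deriv (deriv f) x - c * deriv f x + H))) (at x)"
          using cpos by (auto intro!: derivative_eq_intros pD simp: algebra_simps)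
        show "0 \<le> exp (-c * x) * (deriv (deriv f) x - c * deriv f x + H)"
          using hb[of x] by (intro mult_nonneg_nonneg) auto
      qed
      then have "exp (-c * y0) * \<delta> \<le> exp (-c * s) * (deriv f s - H / c)" unfolding \<delta>_def by simp
      then have m: "exp (c * s) * (exp (-c * y0) * \<delta>) \<le> exp (c * s) * (exp (-c * s) * (deriv f s - H / c))"
        by (intro mult_left_mono) auto
      have e1: "exp (c * s) * (exp (-c * y0) * \<delta>) = exp (c * (s - y0)) * \<delta>"
        by (simp add: exp_diff exp_minus field_simps right_diff_distrib)
      have e2: "exp (c * s) * (exp (-c * s) * (deriv f s - H / c)) = deriv f s - H / c"
        by (simp add: exp_minus)
      from m have "exp (c * (s - y0)) * \<delta> \<le> deriv f s - H / c" unfolding e1 e2 .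
      moreover have "\<delta> \<le> exp (c * (s - y0)) * \<delta>"
      proof -
        have "1 \<le> exp (c * (s - y0))" using s cpos by simp
        from mult_right_mono[OF this, of \<delta>] dpos show ?thesis by simp
      qed
      ultimately show ?thesis using Hnn by linarith
    qed
    define s where "s = y0 + (TM + 1) / \<delta>"
    have sge: "s \<ge> y0" unfolding s_def using dpos TM_pos by simp
    have "f y0 - \<delta> * y0 \<le> f s - \<delta> * s"
    proof (rule deriv_nonneg_imp_mono[OF _ _ sge])
      fix x
      show "((\<lambda>x. f x - \<delta> * x) has_real_derivative (deriv f x - \<delta>)) (at x)"
        by (auto intro!: derivative_eq_intros fD)
      assume "x \<in> {y0..s}"
      then show "0 \<le> deriv f x - \<delta>" using pge[of x] by simp
    qed
    then have "f s \<ge> f y0 + \<delta> * (s - y0)" by (simp add: algebra_simps)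
    also have "\<delta> * (s - y0) = TM + 1" unfolding s_def using dpos by simp
    finally show False using f_pos[of y0] f_hi[of s] by simp
  next
    assume a: "deriv f y0 < - (H / c)"
    define \<delta> where "\<delta> = - deriv f y0 - H / c"
    have dpos: "\<delta> > 0" using a unfolding \<delta>_def by simp
    have Hnn: "H / c \<ge> 0" unfolding H_def using cpos by simp
    have pge: "deriv f s \<le> - \<delta>" if s: "s \<ge> y0" for s
    proof -
      let ?r = "\<lambda>s. exp (-c * s) * (deriv f s + H / c)"
      have "?r s \<le> ?r y0"
      proof (rule deriv_nonpos_imp_antimono[OF _ _ s])
        fix x
        show "(?r has_real_derivative (exp (-c * x) * (deriv (deriv f) x - c * deriv f x - H))) (at x)"
          using cpos by (auto intro!: derivative_eq_intros pD simp: algebra_simps)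
        show "exp (-c * x) * (deriv (deriv f) x - c * deriv f x - H) \<le> 0"
          using hb[of x] by (intro mult_nonneg_nonpos) auto
      qed
      then have "exp (-c * s) * (deriv f s + H / c) \<le> exp (-c * y0) * (- \<delta>)" unfolding \<delta>_def by (simp add: add.commute)
      then have m: "exp (c * s) * (exp (-c * s) * (deriv f s + H / c)) \<le> exp (c * s) * (exp (-c * y0) * (- \<delta>))"
        by (intro mult_left_mono) auto
      have e1: "exp (c * s) * (exp (-c * y0) * (- \<delta>)) = - (exp (c * (s - y0)) * \<delta>)"
        by (simp add: exp_diff exp_minus field_simps right_diff_distrib)
      have e2: "exp (c * s) * (exp (-c * s) * (deriv f s + H / c)) = deriv f s + H / c"
        by (simp add: exp_minus)
      from m have "deriv f s + H / c \<le> - (exp (c * (s - y0)) * \<delta>)" unfolding e1 e2 .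
      moreover have "\<delta> \<le> exp (c * (s - y0)) * \<delta>"
      proof -
        have "1 \<le> exp (c * (s - y0))" using s cpos by simp
        from mult_right_mono[OF this, of \<delta>] dpos show ?thesis by simp
      qed
      ultimately show ?thesis using Hnn by linarith
    qed
    define s where "s = y0 + (TM + 1) / \<delta>"
    have sge: "s \<ge> y0" unfolding s_def using dpos TM_pos by simp
    have "f s + \<delta> * s \<le> f y0 + \<delta> * y0"
    proof (rule deriv_nonpos_imp_antimono[OF _ _ sge])
      fix x
      show "((\<lambda>x. f x + \<delta> * x) has_real_derivative (deriv f x + \<delta>)) (at x)"
        by (auto intro!: derivative_eq_intros fD)
      assume "x \<in> {y0..s}"
      then show "deriv f x + \<delta> \<le> 0" using pge[of x] by simp
    qed
    then have "f s \<le> f y0 - \<delta> * (s - y0)" by (simp add: algebra_simps)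
    also have "\<delta> * (s - y0) = TM + 1" unfolding s_def using dpos by simp
    finally show False using f_pos[of s] f_hi[of y0] by simp
  qed
qed

lemma Edg_int: "integrable lborel (\<lambda>\<eta>. indicator S \<eta> * E (y - \<eta>) * (f y ^ 4 - f \<eta> ^ 4))" if [measurable]: "S \<in> sets borel"
proof (rule Bochner_Integration.integrable_bound[OF integrable_mult_right[OF E_shift_integrable, of "TM^4" y]])
  have b: "norm (indicator S x * E (y - x) * (f y ^ 4 - f x ^ 4)) \<le> norm (TM ^ 4 * E (y - x))" for x
  proof -
    have "\<bar>f y ^ 4 - f x ^ 4\<bar> \<le> TM ^ 4" using g_bounds[of x] g_bounds[of y] by linarith
    then have "E (y - x) * \<bar>f y ^ 4 - f x ^ 4\<bar> \<le> E (y - x) * TM ^ 4" by (intro mult_left_mono E_nonneg)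
    then show ?thesis using E_nonneg[of "y - x"] TM_pos by (auto simp: abs_mult indicator_def mult.commute)
  qed
  then show "AE x in lborel. norm (indicator S x * E (y - x) * (f y ^ 4 - f x ^ 4)) \<le> norm (TM ^ 4 * E (y - x))" by simp
qed measurable

lemma h_repr: "deriv (deriv f) y - c * deriv f y = Nin f a b y + Nout f a b y"
proof -
  have "(LINT \<eta>|lborel. E (y - \<eta>) * (f y ^ 4 - f \<eta> ^ 4)) = (LINT \<eta>|lborel. f y ^ 4 * E (y - \<eta>) - E (y - \<eta>) * f \<eta> ^ 4)"
    by (simp add: algebra_simps)
  also have "\<dots> = f y ^ 4 * (LINT \<eta>|lborel. E (y - \<eta>)) - (LINT \<eta>|lborel. E (y - \<eta>) * f \<eta> ^ 4)"
    by (subst Bochner_Integration.integral_diff) (auto intro!: Eg_int integrable_mult_right E_shift_integrable)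
  also have "\<dots> = deriv (deriv f) y - c * deriv f y" using E_shift_total[of y] eqn[of y] by simp
  finally have 1: "deriv (deriv f) y - c * deriv f y = (LINT \<eta>|lborel. E (y - \<eta>) * (f y ^ 4 - f \<eta> ^ 4))" ..
  have "(LINT \<eta>|lborel. E (y - \<eta>) * (f y ^ 4 - f \<eta> ^ 4)) =
        (LINT \<eta>|lborel. indicator {a..b} \<eta> * E (y - \<eta>) * (f y ^ 4 - f \<eta> ^ 4) + indicator (- {a..b}) \<eta> * E (y - \<eta>) * (f y ^ 4 - f \<eta> ^ 4))"
    by (intro Bochner_Integration.integral_cong) (auto simp: indicator_def)
  also have "\<dots> = Nin f a b y + Nout f a b y"
    unfolding Nin_def Nout_def by (rule Bochner_Integration.integral_add) (auto intro!: Edg_int)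
  finally show ?thesis using 1 by simp
qed

lemma Nin_bound: "\<bar>Nin f a b y\<bar> \<le> TM ^ 4"
proof -
  have "\<bar>Nin f a b y\<bar> \<le> (LINT \<eta>|lborel. \<bar>indicator {a..b} \<eta> * E (y - \<eta>) * (f y ^ 4 - f \<eta> ^ 4)\<bar>)"
    unfolding Nin_def by (rule integral_abs_bound)
  also have "\<dots> \<le> (LINT \<eta>|lborel. TM ^ 4 * E (y - \<eta>))"
  proof (rule integral_mono)
    show "integrable lborel (\<lambda>\<eta>. \<bar>indicator {a..b} \<eta> * E (y - \<eta>) * (f y ^ 4 - f \<eta> ^ 4)\<bar>)"
      by (rule integrable_abs[OF Edg_int]) simp
    show "integrable lborel (\<lambda>\<eta>. TM ^ 4 * E (y - \<eta>))" by (intro integrable_mult_right E_shift_integrable)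
    fix x
    have "\<bar>f y ^ 4 - f x ^ 4\<bar> \<le> TM ^ 4" using g_bounds[of x] g_bounds[of y] by linarith
    then have "E (y - x) * \<bar>f y ^ 4 - f x ^ 4\<bar> \<le> E (y - x) * TM ^ 4" by (intro mult_left_mono E_nonneg)
    then show "\<bar>indicator {a..b} x * E (y - x) * (f y ^ 4 - f x ^ 4)\<bar> \<le> TM ^ 4 * E (y - x)"
      using E_nonneg[of "y - x"] TM_pos by (auto simp: abs_mult indicator_def mult.commute)
  qed
  also have "\<dots> = TM ^ 4" using E_shift_total[of y] by simp
  finally show ?thesis .
qed

lemma Nin_meas[measurable]: "Nin f a b \<in> borel_measurable borel"
proof -
  have "(\<lambda>(y, \<eta>). indicator {a..b} \<eta> * E (y - \<eta>) * (f y ^ 4 - f \<eta> ^ 4)) \<in> borel_measurable (borel \<Otimes>\<^sub>M borel)"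
    by measurable
  then have "(\<lambda>(y, \<eta>). indicator {a..b} \<eta> * E (y - \<eta>) * (f y ^ 4 - f \<eta> ^ 4)) \<in> borel_measurable (borel \<Otimes>\<^sub>M lborel)"
    by (subst measurable_cong_sets[OF sets_pair_measure_cong[OF refl sets_lborel] refl])
  then show ?thesis unfolding Nin_def
    using lborel.borel_measurable_lebesgue_integral[of "\<lambda>y \<eta>. indicator {a..b} \<eta> * E (y - \<eta>) * (f y ^ 4 - f \<eta> ^ 4)" borel]
    by simp
qed

lemma S_in_nonneg:
  assumes k: "0 \<le> k" "k \<le> TM"
  shows "0 \<le> (LINT y|lborel. indicator {a..b} y * (f y - k) * Nin f a b y)"
proof -
  define F where "F y \<eta> = indicator {a..b} y * indicator {a..b} \<eta> * E (y - \<eta>) * ((f y - k) * (f y ^ 4 - f \<eta> ^ 4))" for y \<eta>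
  have Fb: "\<bar>F y \<eta>\<bar> \<le> TM ^ 5 * (indicator {a..b} y * E (y - \<eta>))" for y \<eta>
  proof -
    have "\<bar>f y ^ 4 - f \<eta> ^ 4\<bar> \<le> TM ^ 4" using g_bounds[of \<eta>] g_bounds[of y] by linarith
    moreover have "\<bar>f y - k\<bar> \<le> TM" using f_pos[of y] f_hi[of y] k by linarith
    ultimately have "\<bar>(f y - k) * (f y ^ 4 - f \<eta> ^ 4)\<bar> \<le> TM * TM ^ 4"
      unfolding abs_mult by (intro mult_mono) auto
    then have X: "\<bar>(f y - k) * (f y ^ 4 - f \<eta> ^ 4)\<bar> \<le> TM ^ 5" by (simp add: power_Suc[symmetric] del: power_Suc)
    show ?thesis
    proof (cases "y \<in> {a..b} \<and> \<eta> \<in> {a..b}")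
      case True
      then have "\<bar>F y \<eta>\<bar> = E (y - \<eta>) * \<bar>(f y - k) * (f y ^ 4 - f \<eta> ^ 4)\<bar>"
        unfolding F_def using E_nonneg[of "y - \<eta>"] by (simp add: abs_mult)
      also have "\<dots> \<le> E (y - \<eta>) * TM ^ 5" by (intro mult_left_mono X E_nonneg)
      finally show ?thesis using True by (simp add: mult.commute)
    next
      case False
      then have "F y \<eta> = 0" unfolding F_def by auto
      then show ?thesis using E_nonneg[of "y - \<eta>"] TM_pos by simp
    qed
  qed
  have Fm: "(\<lambda>(y, \<eta>). F y \<eta>) \<in> borel_measurable (borel \<Otimes>\<^sub>M borel)"
    unfolding F_def by measurable
  then have Fm': "(\<lambda>(y, \<eta>). F y \<eta>) \<in> borel_measurable (lborel \<Otimes>\<^sub>M lborel)"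
    by (subst measurable_cong_sets[OF sets_pair_measure_cong[OF sets_lborel sets_lborel] refl])
  have Fm2: "(\<lambda>(\<eta>, y). F y \<eta>) \<in> borel_measurable (borel \<Otimes>\<^sub>M borel)"
    unfolding F_def by measurable
  have Fy_int: "integrable lborel (\<lambda>\<eta>. F y \<eta>)" for y
  proof -
    have "integrable lborel (\<lambda>\<eta>. (indicator {a..b} y * (f y - k)) * (indicator {a..b} \<eta> * E (y - \<eta>) * (f y ^ 4 - f \<eta> ^ 4)))"
      by (intro integrable_mult_right Edg_int) simp
    then show ?thesis by (simp add: F_def algebra_simps)
  qed
  have Fy_int2: "integrable lborel (\<lambda>\<eta>. F \<eta> y)" for y
  proof (rule Bochner_Integration.integrable_bound[OF integrable_mult_right[OF E_shift_integrable, of "TM^5" y]])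
    show "(\<lambda>\<eta>. F \<eta> y) \<in> borel_measurable lborel"
      using measurable_Pair2[OF Fm2, of y] by simp
    show "AE x in lborel. norm (F x y) \<le> norm (TM ^ 5 * E (y - x))"
    proof (intro AE_I2)
      fix x
      have "\<bar>F x y\<bar> \<le> TM ^ 5 * (indicator {a..b} x * E (x - y))" by (rule Fb)
      also have "\<dots> \<le> TM ^ 5 * E (y - x)"
        using TM_pos E_nonneg[of "x - y"] E_swap[of x y] by (intro mult_left_mono) (auto simp: indicator_def)
      finally show "norm (F x y) \<le> norm (TM ^ 5 * E (y - x))" using TM_pos E_nonneg[of "y - x"] by simp
    qed
  qed
  have prod_int: "integrable (lborel \<Otimes>\<^sub>M lborel) (\<lambda>(y, \<eta>). F y \<eta>)"
  proof (rule lborel_pair.Fubini_integrable)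
    show "(\<lambda>(y, \<eta>). F y \<eta>) \<in> borel_measurable (lborel \<Otimes>\<^sub>M lborel)" by (rule Fm')
    show "AE x in lborel. integrable lborel (\<lambda>y. (\<lambda>(y, \<eta>). F y \<eta>) (x, y))"
      using Fy_int by simp
    have ind_int: "integrable lborel (\<lambda>y. TM ^ 5 * indicator {a..b} y)"
      by (intro integrable_mult_right integrable_real_indicator) (auto simp: emeasure_lborel_Icc_eq)
    show "integrable lborel (\<lambda>x. LINT y|lborel. norm ((\<lambda>(y, \<eta>). F y \<eta>) (x, y)))"
    proof (rule Bochner_Integration.integrable_bound[OF ind_int])
      have n: "(\<lambda>z. norm ((\<lambda>(y, \<eta>). F y \<eta>) z)) \<in> borel_measurable (borel \<Otimes>\<^sub>M borel)"
        by (rule measurable_compose[OF Fm borel_measurable_norm])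
      have "(\<lambda>(x, y). norm (F x y)) = (\<lambda>z. norm ((\<lambda>(y, \<eta>). F y \<eta>) z))"
        by (rule ext) (simp split: prod.split)
      with n have "(\<lambda>(x, y). norm (F x y)) \<in> borel_measurable (borel \<Otimes>\<^sub>M borel)" by simp
      then have "(\<lambda>(x, y). norm (F x y)) \<in> borel_measurable (borel \<Otimes>\<^sub>M lborel)"
        by (subst measurable_cong_sets[OF sets_pair_measure_cong[OF refl sets_lborel] refl])
      then show "(\<lambda>x. LINT y|lborel. norm ((\<lambda>(y, \<eta>). F y \<eta>) (x, y))) \<in> borel_measurable lborel"
        using lborel.borel_measurable_lebesgue_integral[of "\<lambda>x y. norm (F x y)" borel] by simp
      show "AE x in lborel. norm (LINT y|lborel. norm ((\<lambda>(y, \<eta>). F y \<eta>) (x, y))) \<le> norm (TM ^ 5 * indicator {a..b} x)"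
      proof (intro AE_I2)
        fix x
        have "(LINT y|lborel. norm (F x y)) \<le> (LINT y|lborel. TM ^ 5 * (indicator {a..b} x * E (x - y)))"
          by (intro integral_mono integrable_norm Fy_int integrable_mult_right E_shift_integrable)
             (use Fb in auto)
        also have "\<dots> = TM ^ 5 * indicator {a..b} x" using E_shift_total[of x] by simp
        finally have "(LINT y|lborel. norm (F x y)) \<le> TM ^ 5 * indicator {a..b} x" .
        moreover have "0 \<le> (LINT y|lborel. norm (F x y))" by (intro integral_nonneg_AE) auto
        ultimately show "norm (LINT y|lborel. norm ((\<lambda>(y, \<eta>). F y \<eta>) (x, y))) \<le> norm (TM ^ 5 * indicator {a..b} x)"
          by simp
      qed
    qed
  qed
  have inner: "(LINT \<eta>|lborel. F y \<eta>) = indicator {a..b} y * (f y - k) * Nin f a b y" for y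
  proof -
    have "(LINT \<eta>|lborel. F y \<eta>) = (LINT \<eta>|lborel. (indicator {a..b} y * (f y - k)) * (indicator {a..b} \<eta> * E (y - \<eta>) * (f y ^ 4 - f \<eta> ^ 4)))"
      by (intro Bochner_Integration.integral_cong) (auto simp: F_def algebra_simps)
    also have "\<dots> = indicator {a..b} y * (f y - k) * Nin f a b y"
      unfolding Nin_def by simp
    finally show ?thesis .
  qed
  define S where "S = (LINT y|lborel. LINT \<eta>|lborel. F y \<eta>)"
  have S_eq: "(LINT y|lborel. indicator {a..b} y * (f y - k) * Nin f a b y) = S"
    unfolding S_def inner ..
  have S_eq2: "S = (LINT y|lborel. LINT \<eta>|lborel. F \<eta> y)"
    unfolding S_def using lborel_pair.Fubini_integral[OF prod_int] by simp
  have int1: "integrable lborel (\<lambda>y. LINT \<eta>|lborel. F y \<eta>)"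
    using lborel_pair.integrable_fst[OF prod_int] by simp
  have int2: "integrable lborel (\<lambda>y. LINT \<eta>|lborel. F \<eta> y)"
    using lborel_pair.integrable_snd[OF prod_int] by simp
  have "2 * S = (LINT y|lborel. (LINT \<eta>|lborel. F y \<eta>) + (LINT \<eta>|lborel. F \<eta> y))"
    using Bochner_Integration.integral_add[OF int1 int2] S_def S_eq2 by simp
  also have "\<dots> = (LINT y|lborel. LINT \<eta>|lborel. F y \<eta> + F \<eta> y)"
    by (intro Bochner_Integration.integral_cong refl Bochner_Integration.integral_add[symmetric] Fy_int Fy_int2)
  also have "\<dots> \<ge> 0"
  proof (intro integral_nonneg_AE AE_I2)
    fix y \<eta>
    have "F y \<eta> + F \<eta> y = indicator {a..b} y * indicator {a..b} \<eta> * E (y - \<eta>) * ((f y - f \<eta>) * (f y ^ 4 - f \<eta> ^ 4))"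
      unfolding F_def using E_swap[of \<eta> y] by (simp add: algebra_simps)
    also have "\<dots> \<ge> 0"
    proof (rule mult_nonneg_nonneg[OF _ pow4_mono_prod[OF f_pos[of y] f_pos[of \<eta>]]])
      show "0 \<le> indicator {a..b} y * indicator {a..b} \<eta> * E (y - \<eta>)"
        using E_nonneg[of "y - \<eta>"] by (simp add: indicator_def)
    qed
    finally show "0 \<le> F y \<eta> + F \<eta> y" .
  qed
  finally show ?thesis using S_eq by simp
qed

end

context wave
begin

lemma Nout_bound:
  assumes y: "a \<le> y" "y \<le> b" and l0: "0 \<le> l" and d: "0 \<le> \<delta>"
    and hyp: "\<And>\<eta>. \<eta> \<notin> {a..b} \<Longrightarrow> \<bar>y - \<eta>\<bar> \<le> l \<Longrightarrow> \<bar>f y ^ 4 - f \<eta> ^ 4\<bar> \<le> \<delta>"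
  shows "\<bar>Nout f a b y\<bar> \<le> \<delta> * (T (y - a) + T (b - y)) + TM ^ 4 * (T (max (y - a) l) + T (max (b - y) l))"
proof -
  define B where "B \<eta> = \<delta> * (indicator {..<a} \<eta> * E (y - \<eta>)) + \<delta> * (indicator {b<..} \<eta> * E (y - \<eta>))
     + TM ^ 4 * (indicator {..<min a (y - l)} \<eta> * E (y - \<eta>)) + TM ^ 4 * (indicator {max b (y + l)<..} \<eta> * E (y - \<eta>))" for \<eta>
  have Bint: "integrable lborel B"
    unfolding B_def by (intro Bochner_Integration.integrable_add integrable_mult_right E_left_int E_right_int)
  have "(LINT \<eta>|lborel. B \<eta>) = \<delta> * T (y - a) + \<delta> * T (b - y) + TM ^ 4 * T (y - min a (y - l)) + TM ^ 4 * T (max b (y + l) - y)"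
    unfolding B_def
    by (simp add: Bochner_Integration.integral_add integrable_mult_right E_left_int E_right_int E_left E_right
          Bochner_Integration.integrable_add del: integral_mult_right integral_mult_right_zero)
  also have "y - min a (y - l) = max (y - a) l" by simp
  also have "max b (y + l) - y = max (b - y) l" by simp
  finally have Bval: "(LINT \<eta>|lborel. B \<eta>) = \<delta> * (T (y - a) + T (b - y)) + TM ^ 4 * (T (max (y - a) l) + T (max (b - y) l))"
    by (simp add: algebra_simps)
  have pw: "\<bar>indicator (- {a..b}) \<eta> * E (y - \<eta>) * (f y ^ 4 - f \<eta> ^ 4)\<bar> \<le> B \<eta>" for \<eta>
  proof -
    have Eg: "0 \<le> E (y - \<eta>)" by (rule E_nonneg)
    have gb: "\<bar>f y ^ 4 - f \<eta> ^ 4\<bar> \<le> TM ^ 4" using g_bounds[of \<eta>] g_bounds[of y] by linarith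
    have Bnn: "0 \<le> \<delta> * (indicator {..<a} \<eta> * E (y - \<eta>))" "0 \<le> \<delta> * (indicator {b<..} \<eta> * E (y - \<eta>))"
      "0 \<le> TM ^ 4 * (indicator {..<min a (y - l)} \<eta> * E (y - \<eta>))"
      "0 \<le> TM ^ 4 * (indicator {max b (y + l)<..} \<eta> * E (y - \<eta>))"
      using Eg d TM_pos by (auto simp: indicator_def)
    have ab: "a \<le> b" using y by simp
    have L: "\<bar>indicator (- {a..b}) \<eta> * E (y - \<eta>) * (f y ^ 4 - f \<eta> ^ 4)\<bar> = (if \<eta> \<in> {a..b} then 0 else E (y - \<eta>) * \<bar>f y ^ 4 - f \<eta> ^ 4\<bar>)"
      using Eg by (simp add: abs_mult indicator_def)
    consider "\<eta> \<in> {a..b}" | "\<eta> < a" "\<bar>y - \<eta>\<bar> \<le> l" | "\<eta> < a" "\<not> \<bar>y - \<eta>\<bar> \<le> l"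
      | "\<eta> > b" "\<bar>y - \<eta>\<bar> \<le> l" | "\<eta> > b" "\<not> \<bar>y - \<eta>\<bar> \<le> l" by force
    then show ?thesis
    proof cases
      case 1 then show ?thesis using Bnn unfolding B_def L by simp
    next
      case 2
      then have "\<bar>f y ^ 4 - f \<eta> ^ 4\<bar> \<le> \<delta>" using hyp by simp
      from mult_right_mono[OF this Eg] have *: "E (y - \<eta>) * \<bar>f y ^ 4 - f \<eta> ^ 4\<bar> \<le> \<delta> * E (y - \<eta>)"
        by (simp add: mult.commute)
      have "\<eta> \<ge> y - l" using 2 by (auto simp: abs_if split: if_splits)
      then have "B \<eta> = \<delta> * E (y - \<eta>)" using 2 ab unfolding B_def by (simp add: indicator_def)
      then show ?thesis using 2 * unfolding L by simp
    next
      case 3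
      then have "\<eta> < min a (y - l)" using y by auto
      then have "B \<eta> = \<delta> * E (y - \<eta>) + TM ^ 4 * E (y - \<eta>)" using 3 ab unfolding B_def by (simp add: indicator_def)
      moreover have "E (y - \<eta>) * \<bar>f y ^ 4 - f \<eta> ^ 4\<bar> \<le> TM ^ 4 * E (y - \<eta>)"
        using mult_left_mono[OF gb Eg] by (simp add: mult.commute)
      moreover have "0 \<le> \<delta> * E (y - \<eta>)" using d Eg by simp
      ultimately show ?thesis using 3 unfolding L by simp
    next
      case 4
      then have "\<bar>f y ^ 4 - f \<eta> ^ 4\<bar> \<le> \<delta>" using hyp by simp
      from mult_right_mono[OF this Eg] have *: "E (y - \<eta>) * \<bar>f y ^ 4 - f \<eta> ^ 4\<bar> \<le> \<delta> * E (y - \<eta>)"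
        by (simp add: mult.commute)
      have "\<eta> \<le> y + l" using 4 by (auto simp: abs_if split: if_splits)
      then have "B \<eta> = \<delta> * E (y - \<eta>)" using 4 ab unfolding B_def by (simp add: indicator_def)
      then show ?thesis using 4 * unfolding L by simp
    next
      case 5
      then have "\<eta> > max b (y + l)" using y by auto
      then have "B \<eta> = \<delta> * E (y - \<eta>) + TM ^ 4 * E (y - \<eta>)" using 5 ab unfolding B_def by (simp add: indicator_def)
      moreover have "E (y - \<eta>) * \<bar>f y ^ 4 - f \<eta> ^ 4\<bar> \<le> TM ^ 4 * E (y - \<eta>)"
        using mult_left_mono[OF gb Eg] by (simp add: mult.commute)
      moreover have "0 \<le> \<delta> * E (y - \<eta>)" using d Eg by simp
      ultimately show ?thesis using 5 unfolding L by simp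
    qed
  qed
  have "\<bar>Nout f a b y\<bar> \<le> (LINT \<eta>|lborel. \<bar>indicator (- {a..b}) \<eta> * E (y - \<eta>) * (f y ^ 4 - f \<eta> ^ 4)\<bar>)"
    unfolding Nout_def by (rule integral_abs_bound)
  also have "\<dots> \<le> (LINT \<eta>|lborel. B \<eta>)"
    by (intro integral_mono Bint pw integrable_abs Edg_int) simp
  finally show ?thesis using Bval by simp
qed

end

lemma LINT_Icc_conv:
  fixes \<phi> :: "real \<Rightarrow> real"
  assumes "continuous_on {a..b} \<phi>"
  shows "(LINT y|lborel. indicator {a..b} y * \<phi> y) = integral {a..b} \<phi>"
    and "integrable lborel (\<lambda>y. indicator {a..b} y * \<phi> y)"
proof -
  have si: "set_integrable lborel {a..b} \<phi>" by (rule borel_integrable_atLeastAtMost'[OF assms])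
  from set_borel_integral_eq_integral(2)[OF si]
  show "(LINT y|lborel. indicator {a..b} y * \<phi> y) = integral {a..b} \<phi>"
    unfolding set_lebesgue_integral_def by simp
  from si show "integrable lborel (\<lambda>y. indicator {a..b} y * \<phi> y)"
    unfolding set_integrable_def by simp
qed

lemma exp_int_bound:
  fixes a b :: real
  assumes ab: "a \<le> b"
  shows "integral {a..b} (\<lambda>y. exp (-(y - a)/2) + exp (-(b - y)/2)) \<le> 4"
proof -
  let ?G = "\<lambda>y. -2 * exp (-(y - a)/2) + 2 * exp (-(b - y)/2)"
  have "((\<lambda>y. exp (-(y - a)/2) + exp (-(b - y)/2)) has_integral (?G b - ?G a)) {a..b}"
  proof (rule fundamental_theorem_of_calculus[OF ab])
    fix x
    show "(?G has_vector_derivative exp (-(x - a)/2) + exp (-(b - x)/2)) (at x within {a..b})"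
      unfolding has_real_derivative_iff_has_vector_derivative[symmetric]
      by (auto intro!: derivative_eq_intros simp: field_simps)
  qed
  then have "integral {a..b} (\<lambda>y. exp (-(y - a)/2) + exp (-(b - y)/2)) = ?G b - ?G a"
    by (rule integral_unique)
  also have "\<dots> = 4 - 4 * exp (-(b - a)/2)" by (simp add: minus_diff_eq)
  also have "\<dots> \<le> 4" by simp
  finally show ?thesis .
qed

context wave
begin

lemma Nout_bound2:
  assumes y: "a \<le> y" "y \<le> b" and l0: "0 \<le> l" and d: "0 \<le> \<delta>"
    and hyp: "\<And>\<eta>. \<eta> \<notin> {a..b} \<Longrightarrow> \<bar>y - \<eta>\<bar> \<le> l \<Longrightarrow> \<bar>f y ^ 4 - f \<eta> ^ 4\<bar> \<le> \<delta>"
  shows "\<bar>Nout f a b y\<bar> \<le> (\<delta> + TM ^ 4 * exp (-l/2)) / 2 * (exp (-(y - a)/2) + exp (-(b - y)/2))"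
proof -
  have T1: "T s \<le> exp (-s/2) / 2" if "s \<ge> 0" for s
    using T_bound[OF that] that by (smt (verit) exp_le_cancel_iff field_sum_of_halves)
  have T2: "T (max s l) \<le> exp (-l/2) * exp (-s/2) / 2" if "s \<ge> 0" for s
  proof -
    have "T (max s l) \<le> exp (- max s l) / 2" using T_bound[of "max s l"] that by simp
    also have "exp (- max s l) \<le> exp (-l/2) * exp (-s/2)"
      unfolding exp_add[symmetric] by simp
    finally show ?thesis by simp
  qed
  have ya: "y - a \<ge> 0" and yb: "b - y \<ge> 0" using y by auto
  have "\<bar>Nout f a b y\<bar> \<le> \<delta> * (T (y - a) + T (b - y)) + TM ^ 4 * (T (max (y - a) l) + T (max (b - y) l))"
    by (rule Nout_bound[OF y l0 d hyp])
  also have "\<dots> \<le> \<delta> * (exp (-(y - a)/2) / 2 + exp (-(b - y)/2) / 2)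
      + TM ^ 4 * (exp (-l/2) * exp (-(y - a)/2) / 2 + exp (-l/2) * exp (-(b - y)/2) / 2)"
    using T1[OF ya] T1[OF yb] T2[OF ya] T2[OF yb] d TM_pos
    by (intro add_mono mult_left_mono) auto
  also have "\<dots> = (\<delta> + TM ^ 4 * exp (-l/2)) / 2 * (exp (-(y - a)/2) + exp (-(b - y)/2))"
    by (simp add: algebra_simps)
  finally show ?thesis .
qed

lemma key:
  assumes ab: "a \<le> b" and l0: "0 \<le> l" and d: "0 \<le> \<delta>"
    and hyp: "\<And>y \<eta>. y \<in> {a..b} \<Longrightarrow> \<eta> \<notin> {a..b} \<Longrightarrow> \<bar>y - \<eta>\<bar> \<le> l \<Longrightarrow> \<bar>f y ^ 4 - f \<eta> ^ 4\<bar> \<le> \<delta>"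
  shows "integral {a..b} (\<lambda>y. (deriv f y)^2) \<le> (deriv f b)^2 / (2 * c) + 2 * TM * (\<delta> + TM ^ 4 * exp (-l/2))"
proof -
  define k where "k = f a"
  have k: "0 \<le> k" "k \<le> TM" unfolding k_def using f_pos f_hi by auto
  define h where "h y = deriv (deriv f) y - c * deriv f y" for y
  define \<Phi> where "\<Phi> y = (f y - k) * deriv f y - c / 2 * (f y - k)^2" for y
  define \<psi> where "\<psi> y = (deriv f y)^2 + (f y - k) * h y" for y
  have fc: "continuous_on {a..b} f" by (rule f_cont)
  have pc: "continuous_on {a..b} (deriv f)" by (rule p_cont)
  have qc: "continuous_on {a..b} (deriv (deriv f))" by (rule q_cont)
  have hc: "continuous_on {a..b} h" unfolding h_def by (intro continuous_intros qc pc)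
  have \<psi>c: "continuous_on {a..b} \<psi>" unfolding \<psi>_def by (intro continuous_intros pc fc hc)
  have p2c: "continuous_on {a..b} (\<lambda>y. (deriv f y)^2)" by (intro continuous_intros pc)
  have fkhc: "continuous_on {a..b} (\<lambda>y. (f y - k) * h y)" by (intro continuous_intros fc hc)
  have "(\<psi> has_integral (\<Phi> b - \<Phi> a)) {a..b}"
  proof (rule fundamental_theorem_of_calculus[OF ab])
    fix x
    show "(\<Phi> has_vector_derivative \<psi> x) (at x within {a..b})"
      unfolding has_real_derivative_iff_has_vector_derivative[symmetric] \<Phi>_def \<psi>_def h_def
      by (rule has_field_derivative_at_within)
         (auto intro!: derivative_eq_intros fD pD simp: algebra_simps power2_eq_square)
  qed
  then have I\<psi>: "integral {a..b} \<psi> = \<Phi> b - \<Phi> a" by (rule integral_unique)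
  have \<Phi>a: "\<Phi> a = 0" unfolding \<Phi>_def k_def by simp
  have \<Phi>b: "\<Phi> b \<le> (deriv f b)^2 / (2 * c)"
  proof -
    have "0 \<le> (c * (f b - k) - deriv f b)^2 / (2 * c)" using cpos by simp
    also have "(c * (f b - k) - deriv f b)^2 / (2 * c) = (deriv f b)^2 / (2 * c) - \<Phi> b"
      unfolding \<Phi>_def using cpos by (simp add: field_simps power2_eq_square)
    finally show ?thesis by simp
  qed
  have L\<psi>: "(LINT y|lborel. indicator {a..b} y * \<psi> y) = \<Phi> b - \<Phi> a"
    using LINT_Icc_conv(1)[OF \<psi>c] I\<psi> by simp
  have Lp2: "(LINT y|lborel. indicator {a..b} y * (deriv f y)^2) = integral {a..b} (\<lambda>y. (deriv f y)^2)"
    by (rule LINT_Icc_conv(1)[OF p2c])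
  have ip2: "integrable lborel (\<lambda>y. indicator {a..b} y * (deriv f y)^2)" by (rule LINT_Icc_conv(2)[OF p2c])
  have ifkh: "integrable lborel (\<lambda>y. indicator {a..b} y * ((f y - k) * h y))" by (rule LINT_Icc_conv(2)[OF fkhc])
  have iNin: "integrable lborel (\<lambda>y. indicator {a..b} y * (f y - k) * Nin f a b y)"
  proof (rule Bochner_Integration.integrable_bound)
    show "integrable lborel (\<lambda>y. TM ^ 5 * indicator {a..b} y)"
      by (intro integrable_mult_right integrable_real_indicator) (auto simp: emeasure_lborel_Icc_eq)
    show "(\<lambda>y. indicator {a..b} y * (f y - k) * Nin f a b y) \<in> borel_measurable lborel" by measurable
    show "AE y in lborel. norm (indicator {a..b} y * (f y - k) * Nin f a b y) \<le> norm (TM ^ 5 * indicator {a..b} y)"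
    proof (intro AE_I2)
      fix y
      have "\<bar>f y - k\<bar> \<le> TM" using f_pos[of y] f_hi[of y] k by linarith
      then have "\<bar>(f y - k) * Nin f a b y\<bar> \<le> TM * TM ^ 4"
        unfolding abs_mult by (intro mult_mono Nin_bound) auto
      then show "norm (indicator {a..b} y * (f y - k) * Nin f a b y) \<le> norm (TM ^ 5 * indicator {a..b} y)"
        using TM_pos by (auto simp: indicator_def abs_mult power_Suc[symmetric] simp del: power_Suc)
    qed
  qed
  define W where "W y = (\<delta> + TM ^ 4 * exp (-l/2)) / 2 * (exp (-(y - a)/2) + exp (-(b - y)/2))" for y
  have Wc: "continuous_on {a..b} W" unfolding W_def by (intro continuous_intros) auto
  have iW: "integrable lborel (\<lambda>y. indicator {a..b} y * (TM * W y))"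
    by (rule LINT_Icc_conv(2)) (intro continuous_intros Wc)
  have LW: "(LINT y|lborel. indicator {a..b} y * (TM * W y)) \<le> 2 * TM * (\<delta> + TM ^ 4 * exp (-l/2))"
  proof -
    have "(LINT y|lborel. indicator {a..b} y * (TM * W y)) = integral {a..b} (\<lambda>y. TM * W y)"
      by (rule LINT_Icc_conv(1)) (intro continuous_intros Wc)
    also have "\<dots> = TM * ((\<delta> + TM ^ 4 * exp (-l/2)) / 2) * integral {a..b} (\<lambda>y. exp (-(y - a)/2) + exp (-(b - y)/2))"
      unfolding W_def by (simp add: mult.assoc)
    also have "\<dots> \<le> TM * ((\<delta> + TM ^ 4 * exp (-l/2)) / 2) * 4"
      using TM_pos d by (intro mult_left_mono exp_int_bound ab) auto
    finally show ?thesis by simp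
  qed
  define R where "R y = indicator {a..b} y * ((f y - k) * h y) - indicator {a..b} y * (f y - k) * Nin f a b y" for y
  have iR: "integrable lborel R" unfolding R_def by (intro Bochner_Integration.integrable_diff ifkh iNin)
  have Rb: "- (indicator {a..b} y * (TM * W y)) \<le> R y" for y
  proof (cases "y \<in> {a..b}")
    case True
    have "R y = (f y - k) * Nout f a b y" unfolding R_def h_def using True h_repr[of y a b]
      by (simp add: algebra_simps)
    moreover have "\<bar>Nout f a b y\<bar> \<le> W y" unfolding W_def
      by (rule Nout_bound2) (use True l0 d hyp in auto)
    moreover have "\<bar>f y - k\<bar> \<le> TM" using f_pos[of y] f_hi[of y] k by linarith
    ultimately have "\<bar>R y\<bar> \<le> TM * W y"
      using mult_mono[of "\<bar>f y - k\<bar>" TM "\<bar>Nout f a b y\<bar>" "W y"] TM_pos by (simp add: abs_mult)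
    then show ?thesis using True by simp
  next
    case False then show ?thesis unfolding R_def by simp
  qed
  have LR: "- (2 * TM * (\<delta> + TM ^ 4 * exp (-l/2))) \<le> (LINT y|lborel. R y)"
  proof -
    have "(LINT y|lborel. - (indicator {a..b} y * (TM * W y))) \<le> (LINT y|lborel. R y)"
      by (intro integral_mono iR Rb integrable_minus iW)
    then show ?thesis using LW by simp
  qed
  have S: "0 \<le> (LINT y|lborel. indicator {a..b} y * (f y - k) * Nin f a b y)" by (rule S_in_nonneg[OF k])
  have split: "(LINT y|lborel. indicator {a..b} y * \<psi> y)
      = (LINT y|lborel. indicator {a..b} y * (deriv f y)^2) + (LINT y|lborel. indicator {a..b} y * (f y - k) * Nin f a b y) + (LINT y|lborel. R y)"
  proof -
    have "(LINT y|lborel. indicator {a..b} y * \<psi> y) = (LINT y|lborel. indicator {a..b} y * (deriv f y)^2 + (indicator {a..b} y * (f y - k) * Nin f a b y + R y))"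
      by (intro Bochner_Integration.integral_cong) (auto simp: \<psi>_def R_def algebra_simps)
    also have "\<dots> = (LINT y|lborel. indicator {a..b} y * (deriv f y)^2) + ((LINT y|lborel. indicator {a..b} y * (f y - k) * Nin f a b y) + (LINT y|lborel. R y))"
      by (simp add: Bochner_Integration.integral_add ip2 iNin iR)
    finally show ?thesis by simp
  qed
  show ?thesis using split L\<psi> Lp2 S LR \<Phi>a \<Phi>b by linarith
qed

end

lemma mono_bdd_tail:
  fixes F :: "real \<Rightarrow> real"
  assumes mono: "\<And>x y. 0 \<le> x \<Longrightarrow> x \<le> y \<Longrightarrow> F x \<le> F y"
    and bdd: "\<And>x. 0 \<le> x \<Longrightarrow> F x \<le> K" and e: "0 < \<epsilon>"
  shows "\<exists>R\<ge>0. \<forall>x\<ge>R. F x - F R \<le> \<epsilon>"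
proof -
  define S where "S = Sup (F ` {0..})"
  have ne: "F ` {0..} \<noteq> {}" by auto
  have ba: "bdd_above (F ` {0..})" using bdd by (auto intro!: bdd_aboveI2)
  have "S - \<epsilon> < S" using e by simp
  then obtain x0 where x0: "x0 \<in> {0..}" "S - \<epsilon> < F x0"
    using less_cSupD[OF ne, of "S - \<epsilon>"] unfolding S_def by auto
  have "\<forall>x\<ge>x0. F x - F x0 \<le> \<epsilon>"
  proof (intro allI impI)
    fix x assume "x \<ge> x0"
    then have "x \<in> {0..}" using x0 by auto
    then have "F x \<le> S" unfolding S_def by (intro cSup_upper ba) auto
    then show "F x - F x0 \<le> \<epsilon>" using x0 by simp
  qed
  then show ?thesis using x0 by auto
qed

context wave
begin

definition I :: "real \<Rightarrow> real \<Rightarrow> real" where "I u v = integral {u..v} (\<lambda>y. (deriv f y)^2)"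

lemma p2_int: "(\<lambda>y. (deriv f y)^2) integrable_on {u..v}"
  by (intro integrable_continuous_interval continuous_intros p_cont)

lemma I_add: "u \<le> v \<Longrightarrow> v \<le> w \<Longrightarrow> I u w = I u v + I v w"
  unfolding I_def by (rule Henstock_Kurzweil_Integration.integral_combine[symmetric]) (auto intro: p2_int)

lemma I_nonneg: "0 \<le> I u v"
  unfolding I_def by (intro integral_nonneg p2_int) auto

lemma I_uniform: "a \<le> b \<Longrightarrow> I a b \<le> (TM ^ 4 / c)^2 / (2 * c) + 2 * TM * TM ^ 4"
proof -
  assume ab: "a \<le> b"
  have "I a b \<le> (deriv f b)^2 / (2 * c) + 2 * TM * (0 + TM ^ 4 * exp (-0/2))"
    unfolding I_def by (rule key[OF ab]) auto
  moreover have "(deriv f b)^2 \<le> (TM ^ 4 / c)^2"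
    using p_bound[of b] by (metis abs_ge_zero power2_abs power_mono)
  then have "(deriv f b)^2 / (2 * c) \<le> (TM ^ 4 / c)^2 / (2 * c)"
    using cpos by (intro divide_right_mono) auto
  ultimately show ?thesis by simp
qed

lemma tails:
  assumes e: "0 < \<epsilon>"
  shows "\<exists>R\<ge>0. (\<forall>u v. R \<le> u \<longrightarrow> u \<le> v \<longrightarrow> I u v \<le> \<epsilon>) \<and> (\<forall>u v. u \<le> v \<longrightarrow> v \<le> -R \<longrightarrow> I u v \<le> \<epsilon>)"
proof -
  define K where "K = (TM ^ 4 / c)^2 / (2 * c) + 2 * TM * TM ^ 4"
  obtain R1 where R1: "R1 \<ge> 0" "\<forall>x\<ge>R1. I 0 x - I 0 R1 \<le> \<epsilon>"
  proof -
    have "\<exists>R\<ge>0. \<forall>x\<ge>R. I 0 x - I 0 R \<le> \<epsilon>"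
    proof (rule mono_bdd_tail[OF _ _ e])
      fix x y :: real assume "0 \<le> x" "x \<le> y"
      then show "I 0 x \<le> I 0 y" using I_add[of 0 x y] I_nonneg[of x y] by simp
    next
      fix x :: real assume "0 \<le> x"
      then show "I 0 x \<le> K" unfolding K_def by (rule I_uniform)
    qed
    then show ?thesis using that by blast
  qed
  obtain R2 where R2: "R2 \<ge> 0" "\<forall>x\<ge>R2. I (-x) 0 - I (-R2) 0 \<le> \<epsilon>"
  proof -
    have "\<exists>R\<ge>0. \<forall>x\<ge>R. I (-x) 0 - I (-R) 0 \<le> \<epsilon>"
    proof (rule mono_bdd_tail[OF _ _ e])
      fix x y :: real assume "0 \<le> x" "x \<le> y"
      then show "I (-x) 0 \<le> I (-y) 0" using I_add[of "-y" "-x" 0] I_nonneg[of "-y" "-x"] by simp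
    next
      fix x :: real assume "0 \<le> x"
      then show "I (-x) 0 \<le> K" unfolding K_def by (intro I_uniform) simp
    qed
    then show ?thesis using that by blast
  qed
  define R where "R = max R1 R2"
  have "\<forall>u v. R \<le> u \<longrightarrow> u \<le> v \<longrightarrow> I u v \<le> \<epsilon>"
  proof (intro allI impI)
    fix u v assume u: "R \<le> u" and uv: "u \<le> v"
    have "I 0 v = I 0 u + I u v" using I_add[of 0 u v] u uv R1 R2 unfolding R_def by simp
    moreover have "I 0 u = I 0 R1 + I R1 u" using I_add[of 0 R1 u] u R1 unfolding R_def by simp
    moreover have "I 0 v - I 0 R1 \<le> \<epsilon>" using R1 u uv unfolding R_def by simp
    ultimately show "I u v \<le> \<epsilon>" using I_nonneg[of R1 u] by linarith
  qed
  moreover have "\<forall>u v. u \<le> v \<longrightarrow> v \<le> -R \<longrightarrow> I u v \<le> \<epsilon>"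
  proof (intro allI impI)
    fix u v assume uv: "u \<le> v" and v: "v \<le> -R"
    have "I u 0 = I u v + I v 0" using I_add[of u v 0] uv v R1 R2 unfolding R_def by simp
    moreover have "I v 0 = I v (-R2) + I (-R2) 0" using I_add[of v "-R2" 0] v R2 unfolding R_def by simp
    moreover have "I (-(-u)) 0 - I (-R2) 0 \<le> \<epsilon>" using R2 uv v unfolding R_def by (intro R2(2)[rule_format]) simp
    ultimately show "I u v \<le> \<epsilon>" using I_nonneg[of v "-R2"] by simp
  qed
  ultimately show ?thesis using R1 R2 unfolding R_def by (intro exI[of _ "max R1 R2"]) auto
qed

lemma CS: assumes uv: "u \<le> v" shows "(f v - f u)^2 \<le> (v - u) * I u v"
proof (cases "u = v")
  case True then show ?thesis by simp
next
  case False
  with uv have lt: "u < v" by simp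
  define m where "m = (f v - f u) / (v - u)"
  have h1: "((\<lambda>y. (deriv f y)^2) has_integral I u v) {u..v}"
    unfolding I_def by (rule integrable_integral[OF p2_int])
  have h2: "(deriv f has_integral (f v - f u)) {u..v}"
    by (rule fundamental_theorem_of_calculus[OF uv])
       (auto intro!: has_field_derivative_at_within fD simp: has_real_derivative_iff_has_vector_derivative[symmetric])
  have h3: "((\<lambda>y. m^2) has_integral (v - u) * m^2) {u..v}"
    using has_integral_const_real[of "m^2" u v] uv by simp
  have "((\<lambda>y. (deriv f y)^2 - 2 * m * deriv f y + m^2) has_integral (I u v - 2 * m * (f v - f u) + (v - u) * m^2)) {u..v}"
    by (intro has_integral_add has_integral_diff h1 h3 has_integral_mult_right h2)
  then have "0 \<le> I u v - 2 * m * (f v - f u) + (v - u) * m^2"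
  proof (rule has_integral_nonneg)
    fix x
    have "(deriv f x)^2 - 2 * m * deriv f x + m^2 = (deriv f x - m)^2" by (simp add: power2_eq_square algebra_simps)
    then show "0 \<le> (deriv f x)^2 - 2 * m * deriv f x + m^2" by simp
  qed
  also have "I u v - 2 * m * (f v - f u) + (v - u) * m^2 = I u v - (f v - f u)^2 / (v - u)"
  proof -
    have w: "v - u \<noteq> 0" using lt by simp
    have "2 * m * (f v - f u) = 2 * ((f v - f u)^2 / (v - u))" unfolding m_def by (simp add: power2_eq_square)
    moreover have "(v - u) * m^2 = (f v - f u)^2 / (v - u)" unfolding m_def using w
      by (simp add: power2_eq_square)
    ultimately show ?thesis by simp
  qed
  finally have "(f v - f u)^2 / (v - u) \<le> I u v" by simp
  then show ?thesis using lt by (simp add: field_simps)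
qed

lemma mean_point: "\<exists>b\<in>{B..B+1}. (deriv f b)^2 \<le> I B (B+1)"
proof -
  have "\<exists>x\<in>{B..B+1}. \<forall>y\<in>{B..B+1}. (deriv f x)^2 \<le> (deriv f y)^2"
    by (intro continuous_attains_inf) (auto intro!: continuous_intros p_cont)
  then obtain b where b: "b \<in> {B..B+1}" "\<And>y. y \<in> {B..B+1} \<Longrightarrow> (deriv f b)^2 \<le> (deriv f y)^2" by blast
  have "integral {B..B+1} (\<lambda>y. (deriv f b)^2) \<le> I B (B+1)"
    unfolding I_def by (intro integral_le p2_int b(2)) auto
  then show ?thesis using b by auto
qed

lemma I_small:
  assumes ab0: "a0 \<le> b0" and e: "0 < \<epsilon>"
  shows "I a0 b0 \<le> \<epsilon>"
proof -
  define L where "L = ln (\<epsilon> / (6 * TM ^ 5))"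
  define l where "l = 2 * \<bar>L\<bar>"
  have l0: "0 \<le> l" unfolding l_def by simp
  have el: "exp (-l/2) \<le> \<epsilon> / (6 * TM ^ 5)"
  proof -
    have "exp (-l/2) = exp (- \<bar>L\<bar>)" unfolding l_def by simp
    also have "\<dots> \<le> exp L" by simp
    also have "\<dots> = \<epsilon> / (6 * TM ^ 5)" unfolding L_def using e TM_pos by simp
    finally show ?thesis .
  qed
  define \<delta> where "\<delta> = \<epsilon> / (6 * TM)"
  have d0: "0 \<le> \<delta>" unfolding \<delta>_def using e TM_pos by simp
  define \<rho> where "\<rho> = \<delta> / (4 * TM ^ 3)"
  have r0: "0 < \<rho>" unfolding \<rho>_def \<delta>_def using e TM_pos by simp
  define \<epsilon>' where "\<epsilon>' = min (\<rho>^2 / (l + 1)) (2 * c * \<epsilon> / 3)"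
  have e'0: "0 < \<epsilon>'" unfolding \<epsilon>'_def using r0 l0 cpos e by simp
  have le': "l * \<epsilon>' \<le> \<rho>^2"
  proof -
    have "l * \<epsilon>' \<le> (l + 1) * (\<rho>^2 / (l + 1))"
      unfolding \<epsilon>'_def using l0 e'0 by (intro mult_mono) (auto simp: \<epsilon>'_def)
    also have "\<dots> = \<rho>^2" using l0 by simp
    finally show ?thesis .
  qed
  obtain R where R: "R \<ge> 0" "\<And>u v. R \<le> u \<Longrightarrow> u \<le> v \<Longrightarrow> I u v \<le> \<epsilon>'"
    "\<And>u v. u \<le> v \<Longrightarrow> v \<le> -R \<Longrightarrow> I u v \<le> \<epsilon>'"
    using tails[OF e'0] by blast
  define a where "a = min a0 (-R - l)"
  define B where "B = max b0 (R + l)"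
  obtain b where b: "b \<in> {B..B+1}" "(deriv f b)^2 \<le> I B (B+1)" using mean_point[of B] by blast
  have RB: "R \<le> B" unfolding B_def using l0 by simp
  have pb: "(deriv f b)^2 \<le> \<epsilon>'" using b(2) R(2)[OF RB, of "B+1"] by simp
  have aa0: "a \<le> a0" and b0b: "b0 \<le> b" using b unfolding a_def B_def by auto
  have ab: "a \<le> b" using aa0 b0b ab0 by simp
  have fclose: "\<bar>f y ^ 4 - f \<eta> ^ 4\<bar> \<le> \<delta>" if "\<bar>f y - f \<eta>\<bar> \<le> \<rho>" for y \<eta>
  proof -
    have "\<bar>f y ^ 4 - f \<eta> ^ 4\<bar> \<le> 4 * TM ^ 3 * \<bar>f y - f \<eta>\<bar>"
      by (rule pow4_diff) (auto intro: f_pos f_hi)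
    also have "\<dots> \<le> 4 * TM ^ 3 * \<rho>" using that TM_pos by (intro mult_left_mono) auto
    also have "\<dots> = \<delta>" unfolding \<rho>_def using TM_pos by simp
    finally show ?thesis .
  qed
  have fclose2: "\<bar>f y - f \<eta>\<bar> \<le> \<rho>" if "\<bar>y - \<eta>\<bar> \<le> l" "I (min y \<eta>) (max y \<eta>) \<le> \<epsilon>'" for y \<eta>
  proof -
    have "(f (max y \<eta>) - f (min y \<eta>))^2 \<le> (max y \<eta> - min y \<eta>) * I (min y \<eta>) (max y \<eta>)"
      by (rule CS) simp
    also have "\<dots> \<le> l * \<epsilon>'"
    proof (rule mult_mono)
      show "max y \<eta> - min y \<eta> \<le> l" using that(1) by (auto simp: abs_if max_def min_def split: if_splits)
    qed (use that I_nonneg[of "min y \<eta>" "max y \<eta>"] l0 in auto)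
    also have "\<dots> \<le> \<rho>^2" by (rule le')
    finally have "(f (max y \<eta>) - f (min y \<eta>))^2 \<le> \<rho>^2" .
    then have "\<bar>f (max y \<eta>) - f (min y \<eta>)\<bar> \<le> \<rho>" using r0 power2_le_imp_le[of "\<bar>f (max y \<eta>) - f (min y \<eta>)\<bar>" \<rho>] by simp
    then show ?thesis by (cases "y \<le> \<eta>") (auto simp: abs_minus_commute max_def min_def)
  qed
  have hyp: "\<bar>f y ^ 4 - f \<eta> ^ 4\<bar> \<le> \<delta>" if y: "y \<in> {a..b}" and \<eta>: "\<eta> \<notin> {a..b}" and yl: "\<bar>y - \<eta>\<bar> \<le> l" for y \<eta>
  proof -
    have "I (min y \<eta>) (max y \<eta>) \<le> \<epsilon>'"
    proof (cases "\<eta> < a")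
      case True
      then have "\<eta> \<le> -R" "y \<le> -R" using yl unfolding a_def by (auto simp: abs_if split: if_splits)
      then show ?thesis by (intro R(3)) auto
    next
      case False
      then have "\<eta> > b" using \<eta> by auto
      then have "\<eta> \<ge> R" "y \<ge> R" using yl b unfolding B_def by (auto simp: abs_if split: if_splits)
      then show ?thesis by (intro R(2)) auto
    qed
    then show ?thesis by (intro fclose fclose2 yl)
  qed
  have "I a b \<le> (deriv f b)^2 / (2 * c) + 2 * TM * (\<delta> + TM ^ 4 * exp (-l/2))"
    unfolding I_def by (rule key[OF ab l0 d0 hyp])
  also have "(deriv f b)^2 / (2 * c) \<le> \<epsilon> / 3"
  proof -
    have "(deriv f b)^2 \<le> 2 * c * \<epsilon> / 3" using pb unfolding \<epsilon>'_def by simp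
    then show ?thesis using cpos by (simp add: field_simps)
  qed
  also have "2 * TM * (\<delta> + TM ^ 4 * exp (-l/2)) \<le> 2 * TM * (\<delta> + TM ^ 4 * (\<epsilon> / (6 * TM ^ 5)))"
    using el TM_pos by (intro mult_left_mono add_left_mono) auto
  also have "2 * TM * (\<delta> + TM ^ 4 * (\<epsilon> / (6 * TM ^ 5))) = 2 * \<epsilon> / 3"
  proof -
    have t5: "TM ^ 5 = TM * TM ^ 4" by (simp add: power_Suc[symmetric] del: power_Suc)
    show ?thesis unfolding \<delta>_def t5 using TM_pos by (simp add: field_simps)
  qed
  finally have Iab: "I a b \<le> \<epsilon>" by simp
  have "I a b = I a a0 + I a0 b0 + I b0 b" using I_add[of a a0 b] I_add[of a0 b0 b] aa0 ab0 b0b by simp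
  then show ?thesis using Iab I_nonneg[of a a0] I_nonneg[of b0 b] by simp
qed

lemma f_const: "f x = f y"
proof -
  have *: "f v = f u" if "u \<le> v" for u v
  proof -
    have "I u v \<le> 0"
    proof (rule field_le_epsilon)
      fix e :: real assume "0 < e" then show "I u v \<le> 0 + e" using I_small[OF that] by simp
    qed
    then have "(f v - f u)^2 \<le> 0" using CS[OF that] I_nonneg[of u v] that
      by (metis diff_ge_0_iff_ge mult_nonneg_nonpos order_trans)
    then show ?thesis by simp
  qed
  show ?thesis using *[of x y] *[of y x] by (cases "x \<le> y") auto
qed

end

theorem theorem3p4:
  fixes c lam TM :: real
  assumes "c > 0" and "0 < lam" and "lam < TM"
  shows "\<exists>\<epsilon>0>0. \<forall>\<epsilon><\<epsilon>0. \<exists>L0>0. \<forall>f. solves c lam TM f \<longrightarrow>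
           (\<forall>L>L0. osc {-L..L} f < \<epsilon> \<longrightarrow> osc {L..} f < 3 * \<epsilon>)"
proof (intro exI[of _ 1] conjI allI impI exI[of _ 1])
  fix \<epsilon> :: real and f :: "real \<Rightarrow> real" and L :: real
  assume sol: "solves c lam TM f" and L: "L > 1" and osc1: "osc {-L..L} f < \<epsilon>"
  interpret wave c lam TM f using assms sol by unfold_locales auto
  have oscz: "osc A f = 0" if "A \<noteq> {}" for A
  proof -
    have "{\<bar>f y1 - f y2\<bar> | y1 y2. y1 \<in> A \<and> y2 \<in> A} = {0}"
      using that f_const by auto
    then show ?thesis unfolding osc_def by simp
  qed
  have "osc {-L..L} f = 0" using L by (intro oscz) auto
  then have "0 < \<epsilon>" using osc1 by simp
  moreover have "osc {L..} f = 0" by (intro oscz) auto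
  ultimately show "osc {L..} f < 3 * \<epsilon>" by simp
qed simp_all


end
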